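(* Let $\lambda\in\mathbb C\setminus\{0\}$ and $\beta=e^{-3c(\lambda)}\in(0,1)$ with $c(\lambda)=\frac13\ln\frac{\sqrt{4|\lambda|^2+1}+1}{\sqrt{4|\lambda|^2+1}-1}$. Let $\Lambda_0=[a,b]$, $\xi\in\mathcal H_{\Lambda_0}$ normalized, $k\in\mathbb N_0$, and $A$ an operator supported in $\Lambda_k=[a,b+3k]$. For $n\ge0$ let $\psi_n=\xi\otimes\widehat\varphi_{k+n}\in\mathcal H_{[a,b+3(k+n)]}$, where $\widehat\varphi=\varphi/\|\varphi\|$ and $\varphi_{k+n}$ sits on $[b+1,b+3(k+n)]$. Then for all $m>n\ge1$, $$\big|\langle\psi_m,A\psi_m\rangle-\langle\psi_n,A\psi_n\rangle\big|\le2(1+\beta-\beta^3)\|A\|\beta^n.$$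
   Context: $\mathcal H_\Lambda=\bigotimes_{x\in\Lambda}\mathbb C^2$ with basis $|1\rangle,|0\rangle$ per site and product basis $|\boldsymbol\sigma\rangle$; an operator supported in $X$ acts as the identity outside $X$. For $L\in\mathbb N$, $\varphi_L\in\bigotimes_{x=1}^{3L}\mathbb C^2$ (transported to any interval of length $3L$) is $\varphi_L=\sum_{\mathbf D}\lambda^{\#(\mathbf D)}|\boldsymbol\sigma(\mathbf D)\rangle$, summing over all tilings $\mathbf D$ obtained from $L$ consecutive monomers (length 3, content $100$) by replacing some disjoint pairs of consecutive monomers by a dimer (length 6, content $011000$); $\#(\mathbf D)$ is the number of dimers and $\boldsymbol\sigma(\mathbf D)$ the concatenated 0/1 content. $\varphi_0=1$. *)

theory Defs
  imports Complex_Main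
begin

text \<open>States on a chain of N sites (sites labelled 1..N relative to the left end of the
interval) are functions on configurations, i.e. boolean lists of length N
(True = |1>, False = |0>). Only values on lists of length N matter.\<close>

definition lists_of_len :: "nat \<Rightarrow> bool list set" where
  "lists_of_len N = {xs. length xs = N}"

definition inner_st :: "nat \<Rightarrow> (bool list \<Rightarrow> complex) \<Rightarrow> (bool list \<Rightarrow> complex) \<Rightarrow> complex" where
  "inner_st N u v = (\<Sum>\<sigma>\<in>lists_of_len N. cnj (u \<sigma>) * v \<sigma>)"

definition norm_st :: "nat \<Rightarrow> (bool list \<Rightarrow> complex) \<Rightarrow> real" where
  "norm_st N u = sqrt (\<Sum>\<sigma>\<in>lists_of_len N. (cmod (u \<sigma>))^2)"

text \<open>An operator supported on the first M sites, given by its matrix A, acting on a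
longer chain as A tensor identity.\<close>

definition apply_op :: "nat \<Rightarrow> (bool list \<Rightarrow> bool list \<Rightarrow> complex) \<Rightarrow> (bool list \<Rightarrow> complex) \<Rightarrow> (bool list \<Rightarrow> complex)" where
  "apply_op M A u = (\<lambda>\<sigma>. \<Sum>\<tau>\<in>lists_of_len M. A (take M \<sigma>) \<tau> * u (\<tau> @ drop M \<sigma>))"

definition op_norm :: "nat \<Rightarrow> (bool list \<Rightarrow> bool list \<Rightarrow> complex) \<Rightarrow> real" where
  "op_norm M A = Sup {norm_st M (apply_op M A u) | u. norm_st M u \<le> 1}"

datatype tile = Mono | Dimer

fun tile_content :: "tile \<Rightarrow> bool list" where
  "tile_content Mono = [True, False, False]"
| "tile_content Dimer = [False, True, True, False, False, False]"

fun tile_len :: "tile \<Rightarrow> nat" where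
  "tile_len Mono = 1"
| "tile_len Dimer = 2"

text \<open>Tilings of L consecutive monomers: sequences of monomers / dimers (a dimer replaces
two consecutive monomers).\<close>

definition tilings :: "nat \<Rightarrow> tile list set" where
  "tilings L = {D. sum_list (map tile_len D) = L}"

definition num_dimers :: "tile list \<Rightarrow> nat" where
  "num_dimers D = count_list D Dimer"

definition config :: "tile list \<Rightarrow> bool list" where
  "config D = concat (map tile_content D)"

definition phi :: "complex \<Rightarrow> nat \<Rightarrow> bool list \<Rightarrow> complex" where
  "phi lam L = (\<lambda>\<sigma>. \<Sum>D\<in>tilings L. if config D = \<sigma> then lam ^ num_dimers D else 0)"

definition phi_hat :: "complex \<Rightarrow> nat \<Rightarrow> bool list \<Rightarrow> complex" where
  "phi_hat lam L = (\<lambda>\<sigma>. phi lam L \<sigma> / complex_of_real (norm_st (3 * L) (phi lam L)))"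

definition psi :: "nat \<Rightarrow> (bool list \<Rightarrow> complex) \<Rightarrow> complex \<Rightarrow> nat \<Rightarrow> bool list \<Rightarrow> complex" where
  "psi d xi lam L = (\<lambda>\<sigma>. xi (take d \<sigma>) * phi_hat lam L (drop d \<sigma>))"

definition c_lam :: "complex \<Rightarrow> real" where
  "c_lam lam = (1/3) * ln ((sqrt (4 * (cmod lam)^2 + 1) + 1) / (sqrt (4 * (cmod lam)^2 + 1) - 1))"

definition beta :: "complex \<Rightarrow> real" where
  "beta lam = exp (- 3 * c_lam lam)"

end

theory Submission
  imports Defs "HOL-Analysis.Convex"
begin

lemma fin_len: "finite (lists_of_len N)"
  unfolding lists_of_len_def using finite_lists_length_eq[of "UNIV::bool set" N] by simp

lemma mem_len[simp]: "\<sigma> \<in> lists_of_len N \<longleftrightarrow> length \<sigma> = N"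
  by (simp add: lists_of_len_def)

lemma sum_len_append:
  "(\<Sum>\<sigma>\<in>lists_of_len (a+b). f \<sigma>) = (\<Sum>\<tau>\<in>lists_of_len a. \<Sum>\<rho>\<in>lists_of_len b. f (\<tau>@\<rho>))"
proof -
  let ?g = "\<lambda>x. fst x @ snd x"
  have inj: "inj_on ?g (lists_of_len a \<times> lists_of_len b)"
  proof (rule inj_onI)
    fix x y assume "x \<in> lists_of_len a \<times> lists_of_len b" "y \<in> lists_of_len a \<times> lists_of_len b" "?g x = ?g y"
    then show "x = y" by (cases x, cases y) (simp add: append_eq_append_conv)
  qed
  have img: "?g ` (lists_of_len a \<times> lists_of_len b) = lists_of_len (a+b)"
  proof (rule set_eqI, rule iffI)
    fix xs assume "xs \<in> lists_of_len (a+b)"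
    then have "xs = ?g (take a xs, drop a xs)" "(take a xs, drop a xs) \<in> lists_of_len a \<times> lists_of_len b" by auto
    then show "xs \<in> ?g ` (lists_of_len a \<times> lists_of_len b)" by blast
  next
    fix xs assume "xs \<in> ?g ` (lists_of_len a \<times> lists_of_len b)"
    then show "xs \<in> lists_of_len (a+b)" by auto
  qed
  have "(\<Sum>\<sigma>\<in>lists_of_len (a+b). f \<sigma>) = (\<Sum>x\<in>lists_of_len a \<times> lists_of_len b. f (?g x))"
    using sum.reindex[OF inj, of f] img by simp
  also have "\<dots> = (\<Sum>\<tau>\<in>lists_of_len a. \<Sum>\<rho>\<in>lists_of_len b. f (\<tau>@\<rho>))"
    by (subst sum.cartesian_product) (simp add: case_prod_beta)
  finally show ?thesis .
qed

lemma tile_len_pos: "tile_len t \<ge> 1" by (cases t) auto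

lemma tile_len_ne0[simp]: "tile_len t \<noteq> 0" by (cases t) auto

lemma tl_zero: "sum_list (map tile_len D) = 0 \<Longrightarrow> D = []"
  by (cases D) auto

lemma tilings_0: "tilings 0 = {[]}"
  using tl_zero by (auto simp: tilings_def)

lemma tile_len_1: "tile_len t = 1 \<longleftrightarrow> t = Mono" by (cases t) auto

lemma tilings_1: "tilings (Suc 0) = {[Mono]}"
proof -
  have "sum_list (map tile_len D) = 1 \<Longrightarrow> D = [Mono]" for D
  proof (cases D)
    case (Cons t D')
    assume h: "sum_list (map tile_len D) = 1"
    have s: "tile_len t + sum_list (map tile_len D') = 1" using h Cons by simp
    then have "sum_list (map tile_len D') = 0" "tile_len t = 1" using tile_len_pos[of t] by linarith+
    then have "D' = []" "t = Mono" using tl_zero tile_len_1 by blast+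
    then show ?thesis using Cons by simp
  qed auto
  then show ?thesis by (auto simp: tilings_def)
qed

lemma tilings_SS: "tilings (Suc (Suc L)) = Cons Mono ` tilings (Suc L) \<union> Cons Dimer ` tilings L"
proof (rule set_eqI, rule iffI)
  fix D assume h: "D \<in> tilings (Suc (Suc L))"
  show "D \<in> Cons Mono ` tilings (Suc L) \<union> Cons Dimer ` tilings L"
  proof (cases D)
    case Nil then show ?thesis using h by (auto simp: tilings_def)
  next
    case (Cons t D')
    then show ?thesis using h by (cases t) (auto simp: tilings_def)
  qed
next
  fix D assume "D \<in> Cons Mono ` tilings (Suc L) \<union> Cons Dimer ` tilings L"
  then show "D \<in> tilings (Suc (Suc L))" by (auto simp: tilings_def)
qed

lemma fin_tilings: "finite (tilings L) \<and> finite (tilings (Suc L))"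
proof (induction L)
  case 0
  then show ?case by (simp add: tilings_0 tilings_1)
next
  case (Suc L)
  then show ?case by (simp only: tilings_SS finite_Un finite_imageI)
qed

lemma config_Nil[simp]: "config [] = []" by (simp add: config_def)
lemma config_Cons[simp]: "config (t#D) = tile_content t @ config D" by (simp add: config_def)
lemma nd_Nil[simp]: "num_dimers [] = 0" by (simp add: num_dimers_def)
lemma nd_Mono[simp]: "num_dimers (Mono#D) = num_dimers D" by (simp add: num_dimers_def)
lemma nd_Dimer[simp]: "num_dimers (Dimer#D) = Suc (num_dimers D)" by (simp add: num_dimers_def)

lemma phi_0: "phi lam 0 \<sigma> = (if \<sigma> = [] then 1 else 0)"
  by (auto simp: phi_def tilings_0)

lemma phi_1: "phi lam (Suc 0) \<sigma> = (if \<sigma> = [True,False,False] then 1 else 0)"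
  by (auto simp: phi_def tilings_1)

lemma app_eq_len: "length xs = n \<Longrightarrow> (xs @ c = \<sigma>) = (take n \<sigma> = xs \<and> c = drop n \<sigma>)"
  using append_eq_conv_conj[of xs c \<sigma>] by auto
lemma app3: "(a1 # a2 # a3 # c = \<sigma>) = (take 3 \<sigma> = [a1,a2,a3] \<and> c = drop 3 \<sigma>)"
  using app_eq_len[of "[a1,a2,a3]" 3 c \<sigma>] by simp
lemma app6: "(a1 # a2 # a3 # a4 # a5 # a6 # c = \<sigma>) = (take 6 \<sigma> = [a1,a2,a3,a4,a5,a6] \<and> c = drop 6 \<sigma>)"
  using app_eq_len[of "[a1,a2,a3,a4,a5,a6]" 6 c \<sigma>] by simp

lemma phi_SS: "phi lam (Suc (Suc L)) \<sigma> =
   (if take 3 \<sigma> = [True,False,False] then phi lam (Suc L) (drop 3 \<sigma>) else 0)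
 + (if take 6 \<sigma> = [False,True,True,False,False,False] then lam * phi lam L (drop 6 \<sigma>) else 0)"
proof -
  have fin1: "finite (tilings (Suc L))" and fin0: "finite (tilings L)" using fin_tilings by blast+
  define f where "f D = (if config D = \<sigma> then lam ^ num_dimers D else 0)" for D
  have "phi lam (Suc (Suc L)) \<sigma> = sum f (Cons Mono ` tilings (Suc L) \<union> Cons Dimer ` tilings L)"
    by (simp add: phi_def tilings_SS f_def)
  also have "\<dots> = sum f (Cons Mono ` tilings (Suc L)) + sum f (Cons Dimer ` tilings L)"
    by (rule sum.union_disjoint) (use fin1 fin0 in auto)
  also have "sum f (Cons Mono ` tilings (Suc L)) = (\<Sum>D\<in>tilings (Suc L). f (Mono # D))"
    by (subst sum.reindex) (auto simp: inj_on_def)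
  also have "\<dots> = (if take 3 \<sigma> = [True,False,False] then phi lam (Suc L) (drop 3 \<sigma>) else 0)"
  proof (cases "take 3 \<sigma> = [True,False,False]")
    case True
    then show ?thesis unfolding f_def phi_def if_P[OF True]
      by (intro sum.cong refl) (auto simp: app3)
  next
    case False
    then show ?thesis unfolding f_def phi_def
      by (auto simp: app3 intro!: sum.neutral)
  qed
  also have "sum f (Cons Dimer ` tilings L) = (\<Sum>D\<in>tilings L. f (Dimer # D))"
    by (subst sum.reindex) (auto simp: inj_on_def)
  also have "\<dots> = (if take 6 \<sigma> = [False,True,True,False,False,False] then lam * phi lam L (drop 6 \<sigma>) else 0)"
  proof (cases "take 6 \<sigma> = [False,True,True,False,False,False]")
    case True
    then show ?thesis unfolding f_def phi_def sum_distrib_left if_P[OF True]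
      by (intro sum.cong refl) (auto simp: app6)
  next
    case False
    then show ?thesis unfolding f_def phi_def
      by (auto simp: app6 intro!: sum.neutral)
  qed
  finally show ?thesis .
qed

fun Uf :: "complex \<Rightarrow> nat \<Rightarrow> bool list \<Rightarrow> complex" where
  "Uf lam 0 \<tau> = 0"
| "Uf lam (Suc 0) \<tau> = (if \<tau> = [False,True,True] then 1 else 0)"
| "Uf lam (Suc (Suc k)) \<tau> =
   (if take 3 \<tau> = [True,False,False] then Uf lam (Suc k) (drop 3 \<tau>) else 0)
 + (if take 6 \<tau> = [False,True,True,False,False,False] then lam * Uf lam k (drop 6 \<tau>) else 0)"

definition Vf :: "complex \<Rightarrow> nat \<Rightarrow> bool list \<Rightarrow> complex" where
  "Vf lam j \<rho> = (if j = 0 then 0 else if take 3 \<rho> = [False,False,False] then phi lam (j-1) (drop 3 \<rho>) else 0)"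

lemma app3_6: "length \<tau> = 3 \<Longrightarrow> (\<tau> @ x = [a1,a2,a3,a4,a5,a6]) = (\<tau> = [a1,a2,a3] \<and> x = [a4,a5,a6])"
  using app_eq_len[of \<tau> 3 x "[a1,a2,a3,a4,a5,a6]"] by (auto simp: eval_nat_numeral)

lemma phi_split:
  "length \<tau> = 3*k \<Longrightarrow> length \<rho> = 3*j \<Longrightarrow>
   phi lam (k+j) (\<tau>@\<rho>) = phi lam k \<tau> * phi lam j \<rho> + lam * Uf lam k \<tau> * Vf lam j \<rho>"
proof (induction k arbitrary: \<tau> rule: less_induct)
  case (less k)
  show ?case
  proof (cases k)
    case 0
    then show ?thesis using less by (simp add: phi_0)
  next
    case (Suc k1)
    show ?thesis
    proof (cases k1)
      case 0
      with Suc have k1: "k = Suc 0" by simp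
      show ?thesis
      proof (cases j)
        case 0
        then show ?thesis using less k1 by (simp add: phi_0 Vf_def)
      next
        case (Suc j')
        have l: "length \<tau> = 3" using less k1 by simp
        have e1: "take 3 (\<tau>@\<rho>) = \<tau>" "drop 3 (\<tau>@\<rho>) = \<rho>" using l by auto
        have e2: "take 6 (\<tau>@\<rho>) = \<tau> @ take 3 \<rho>" "drop 6 (\<tau>@\<rho>) = drop 3 \<rho>" using l by auto
        have "phi lam (k + j) (\<tau>@\<rho>) = phi lam (Suc (Suc j')) (\<tau>@\<rho>)" using Suc k1 by simp
        also have "\<dots> = (if \<tau> = [True,False,False] then phi lam (Suc j') \<rho> else 0)
           + (if \<tau> = [False,True,True] \<and> take 3 \<rho> = [False,False,False] then lam * phi lam j' (drop 3 \<rho>) else 0)"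
          unfolding phi_SS e1 e2 app3_6[OF l] by simp
        also have "\<dots> = phi lam k \<tau> * phi lam j \<rho> + lam * Uf lam k \<tau> * Vf lam j \<rho>"
          using Suc k1 by (simp add: phi_1 Vf_def)
        finally show ?thesis .
      qed
    next
      case (Suc k')
      with \<open>k = Suc k1\<close> have kk: "k = Suc (Suc k')" by simp
      have l: "length \<tau> \<ge> 6" using less kk by simp
      have e1: "take 3 (\<tau>@\<rho>) = take 3 \<tau>" "drop 3 (\<tau>@\<rho>) = drop 3 \<tau> @ \<rho>" using l by auto
      have e2: "take 6 (\<tau>@\<rho>) = take 6 \<tau>" "drop 6 (\<tau>@\<rho>) = drop 6 \<tau> @ \<rho>" using l by auto
      have IH1: "phi lam (Suc k' + j) (drop 3 \<tau> @ \<rho>) = phi lam (Suc k') (drop 3 \<tau>) * phi lam j \<rho> + lam * Uf lam (Suc k') (drop 3 \<tau>) * Vf lam j \<rho>"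
        using less.IH[of "Suc k'" "drop 3 \<tau>"] less.prems kk by simp
      have IH2: "phi lam (k' + j) (drop 6 \<tau> @ \<rho>) = phi lam k' (drop 6 \<tau>) * phi lam j \<rho> + lam * Uf lam k' (drop 6 \<tau>) * Vf lam j \<rho>"
        using less.IH[of "k'" "drop 6 \<tau>"] less.prems kk by simp
      have "phi lam (k + j) (\<tau>@\<rho>) = phi lam (Suc (Suc (k' + j))) (\<tau>@\<rho>)" using kk by simp
      also have "\<dots> = (if take 3 \<tau> = [True,False,False] then phi lam (Suc k' + j) (drop 3 \<tau> @ \<rho>) else 0)
          + (if take 6 \<tau> = [False,True,True,False,False,False] then lam * phi lam (k' + j) (drop 6 \<tau> @ \<rho>) else 0)"
        unfolding phi_SS e1 e2 by simp
      also have "\<dots> = phi lam (Suc (Suc k')) \<tau> * phi lam j \<rho> + lam * Uf lam (Suc (Suc k')) \<tau> * Vf lam j \<rho>"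
        unfolding IH1 IH2 phi_SS[of lam k' \<tau>] Uf.simps(3)
        by (simp add: algebra_simps)
      finally show ?thesis using kk by simp
    qed
  qed
qed

definition Zs :: "complex \<Rightarrow> nat \<Rightarrow> real" where
  "Zs lam j = (\<Sum>\<sigma>\<in>lists_of_len (3*j). (cmod (phi lam j \<sigma>))^2)"
definition Zu :: "complex \<Rightarrow> nat \<Rightarrow> real" where
  "Zu lam j = (\<Sum>\<sigma>\<in>lists_of_len (3*j). (cmod (Uf lam j \<sigma>))^2)"
definition ZV :: "complex \<Rightarrow> nat \<Rightarrow> real" where
  "ZV lam j = (\<Sum>\<sigma>\<in>lists_of_len (3*j). (cmod (Vf lam j \<sigma>))^2)"

lemma take3_take6: "take 6 \<rho> = [a1,a2,a3,a4,a5,a6] \<Longrightarrow> take 3 \<rho> = [a1,a2,a3]"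
proof -
  assume h: "take 6 \<rho> = [a1,a2,a3,a4,a5,a6]"
  have "take 3 \<rho> = take 3 (take 6 \<rho>)" by simp
  also have "\<dots> = [a1,a2,a3]" using h by (simp add: eval_nat_numeral)
  finally show ?thesis .
qed

lemma phi_V_ortho: "phi lam j \<rho> * Vf lam j \<rho> = 0"
proof (cases "j = 0 \<or> take 3 \<rho> \<noteq> [False,False,False]")
  case True
  then show ?thesis by (auto simp: Vf_def)
next
  case False
  then have j: "j \<noteq> 0" and t: "take 3 \<rho> = [False,False,False]" by auto
  have "phi lam j \<rho> = 0"
  proof (cases j)
    case (Suc j1)
    show ?thesis
    proof (cases j1)
      case 0
      then show ?thesis using Suc t by (auto simp: phi_1)
    next
      case (Suc j2)
      have "take 6 \<rho> \<noteq> [False,True,True,False,False,False]" using t take3_take6 by fastforce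
      then show ?thesis using t \<open>j = Suc j1\<close> Suc by (simp add: phi_SS)
    qed
  qed (use j in simp)
  then show ?thesis by simp
qed

lemma len0: "lists_of_len 0 = {[]}" by (auto simp: lists_of_len_def)

lemma sum_len3_delta: "length c = 3 \<Longrightarrow> (\<Sum>a\<in>lists_of_len 3. if a = c then f a else 0) = f c"
  by (simp add: sum.delta' fin_len)

lemma Zs_0: "Zs lam 0 = 1" by (simp add: Zs_def len0 phi_0)

lemma Zs_1: "Zs lam (Suc 0) = 1"
proof -
  have "Zs lam (Suc 0) = (\<Sum>a\<in>lists_of_len 3. if a = [True,False,False] then 1 else 0)"
    unfolding Zs_def by (intro sum.cong) (auto simp: phi_1)
  also have "\<dots> = 1" using sum_len3_delta[of "[True,False,False]" "\<lambda>_. 1::real"] by simp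
  finally show ?thesis .
qed

lemma Zu_1: "Zu lam (Suc 0) = 1"
proof -
  have "Zu lam (Suc 0) = (\<Sum>a\<in>lists_of_len 3. if a = [False,True,True] then 1 else 0)"
    unfolding Zu_def by (intro sum.cong) auto
  also have "\<dots> = 1" using sum_len3_delta[of "[False,True,True]" "\<lambda>_. 1::real"] by simp
  finally show ?thesis .
qed

lemma ZV_Suc: "ZV lam (Suc j) = Zs lam j"
proof -
  have "ZV lam (Suc j) = (\<Sum>a\<in>lists_of_len 3. \<Sum>\<rho>\<in>lists_of_len (3*j). (cmod (Vf lam (Suc j) (a@\<rho>)))^2)"
    unfolding ZV_def using sum_len_append[where a=3 and b="3*j"] by simp
  also have "\<dots> = (\<Sum>a\<in>lists_of_len 3. if a = [False,False,False] then Zs lam j else 0)"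
    unfolding Zs_def by (intro sum.cong refl) (auto simp: Vf_def)
  also have "\<dots> = Zs lam j" using sum_len3_delta[of "[False,False,False]" "\<lambda>_. Zs lam j"] by simp
  finally show ?thesis .
qed

lemma Zs_split: "Zs lam (k+j) = Zs lam k * Zs lam j + (cmod lam)^2 * Zu lam k * ZV lam j"
proof -
  have "Zs lam (k+j) = (\<Sum>\<tau>\<in>lists_of_len (3*k). \<Sum>\<rho>\<in>lists_of_len (3*j). (cmod (phi lam (k+j) (\<tau>@\<rho>)))^2)"
    unfolding Zs_def using sum_len_append[where a="3*k" and b="3*j"] by (simp add: distrib_left)
  also have "\<dots> = (\<Sum>\<tau>\<in>lists_of_len (3*k). \<Sum>\<rho>\<in>lists_of_len (3*j).
      (cmod (phi lam k \<tau>))^2 * (cmod (phi lam j \<rho>))^2 + (cmod lam)^2 * ((cmod (Uf lam k \<tau>))^2 * (cmod (Vf lam j \<rho>))^2))"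
  proof (intro sum.cong refl)
    fix \<tau> \<rho> assume "\<tau> \<in> lists_of_len (3*k)" "\<rho> \<in> lists_of_len (3*j)"
    then have e: "phi lam (k+j) (\<tau>@\<rho>) = phi lam k \<tau> * phi lam j \<rho> + lam * Uf lam k \<tau> * Vf lam j \<rho>"
      by (simp add: phi_split)
    have o: "phi lam j \<rho> = 0 \<or> Vf lam j \<rho> = 0" using phi_V_ortho[of lam j \<rho>] by simp
    show "(cmod (phi lam (k+j) (\<tau>@\<rho>)))^2 = (cmod (phi lam k \<tau>))^2 * (cmod (phi lam j \<rho>))^2 + (cmod lam)^2 * ((cmod (Uf lam k \<tau>))^2 * (cmod (Vf lam j \<rho>))^2)"
      unfolding e using o by (auto simp: norm_mult power_mult_distrib)
  qed
  also have "\<dots> = Zs lam k * Zs lam j + (cmod lam)^2 * Zu lam k * ZV lam j"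
  proof -
    have 1: "Zs lam k * Zs lam j = (\<Sum>\<tau>\<in>lists_of_len (3*k). \<Sum>\<rho>\<in>lists_of_len (3*j). (cmod (phi lam k \<tau>))^2 * (cmod (phi lam j \<rho>))^2)"
      unfolding Zs_def by (rule sum_product)
    have 2: "Zu lam k * ZV lam j = (\<Sum>\<tau>\<in>lists_of_len (3*k). \<Sum>\<rho>\<in>lists_of_len (3*j). (cmod (Uf lam k \<tau>))^2 * (cmod (Vf lam j \<rho>))^2)"
      unfolding Zu_def ZV_def by (rule sum_product)
    show ?thesis unfolding sum.distrib mult.assoc 1 2 by (simp add: sum_distrib_left)
  qed
  finally show ?thesis .
qed

lemma Zs_rec: "Zs lam (Suc (Suc j)) = Zs lam (Suc j) + (cmod lam)^2 * Zs lam j"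
  using Zs_split[of lam "Suc 0" "Suc j"] by (simp add: Zs_1 Zu_1 ZV_Suc)

lemma Zu_eq: "lam \<noteq> 0 \<Longrightarrow> Zu lam k = (if k = 0 then 0 else Zs lam (k - 1))"
proof (cases k)
  case 0
  then show ?thesis by (simp add: Zu_def)
next
  case (Suc k')
  assume l: "lam \<noteq> 0"
  have "Zs lam (Suc k' + Suc 0) = Zs lam (Suc k') * Zs lam (Suc 0) + (cmod lam)^2 * Zu lam (Suc k') * ZV lam (Suc 0)"
    by (rule Zs_split)
  then have "Zs lam (Suc (Suc k')) = Zs lam (Suc k') + (cmod lam)^2 * Zu lam (Suc k')"
    by (simp add: Zs_1 ZV_Suc Zs_0)
  then have "(cmod lam)^2 * Zu lam (Suc k') = (cmod lam)^2 * Zs lam k'" using Zs_rec[of lam k'] by linarith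
  then have "Zu lam (Suc k') = Zs lam k'" using l by simp
  then show ?thesis using Suc by simp
qed

lemma key_ineq:
  fixes b s v w :: real
  assumes b0: "0 < b" and b1: "b < 1" and hs: "\<bar>s\<bar> \<le> b" and hv: "\<bar>v\<bar> \<le> b" and hw: "\<bar>w\<bar> \<le> b"
  shows "b*(1+b*s)*(1-s)*(1-w) \<le> (1+b)*(1+b-b^3)*((1+b*s*v)*(1+b*s*v*w))"
proof -
  define \<sigma> where "\<sigma> = \<bar>s\<bar>"
  define X where "X = b^2*\<sigma>"
  define x where "x = b*s*v"
  have pd: "n1 \<le> n2 \<Longrightarrow> b^n2 \<le> b^n1" for n1 n2 :: nat
    by (rule power_decreasing) (use b0 b1 in auto)
  have b2: "b^2 \<le> b" "b^3 \<le> b" "b^4 \<le> b^2" "b^5 \<le> b"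
    using pd[of 1 2] pd[of 1 3] pd[of 2 4] pd[of 1 5] by auto
  have s0: "0 \<le> \<sigma>" "\<sigma> \<le> b" using hs unfolding \<sigma>_def by auto
  have X0: "0 \<le> X" unfolding X_def using s0 by simp
  have Xb: "X \<le> b^3" unfolding X_def using s0 b0 by (simp add: power3_eq_cube power2_eq_square mult_left_mono)
  have X1: "X \<le> 1" using Xb b2 b1 by linarith
  have xX: "\<bar>x\<bar> \<le> X"
  proof -
    have "\<bar>x\<bar> = b*(\<bar>s\<bar>*\<bar>v\<bar>)" unfolding x_def using b0 by (simp add: abs_mult)
    also have "\<dots> \<le> b*(\<bar>s\<bar>*b)" using hv b0 by (intro mult_left_mono) (auto intro: mult_left_mono)
    finally show ?thesis unfolding X_def \<sigma>_def by (simp add: power2_eq_square mult_ac)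
  qed
  have g1: "(1-X)*(1-X*w) \<le> (1+x)*(1+x*w)"
  proof -
    have id: "(1+x)*(1+x*w) - (1-X)*(1-X*w) = (x+X)*(1 + w*(1+x-X))" by algebra
    have a: "\<bar>1+x-X\<bar> \<le> 1" using xX X1 by linarith
    have "\<bar>w*(1+x-X)\<bar> \<le> b*1" unfolding abs_mult using hw a by (intro mult_mono) auto
    then have "0 \<le> 1 + w*(1+x-X)" using b1 by linarith
    moreover have "0 \<le> x + X" using xX by linarith
    ultimately show ?thesis using id by (metis diff_ge_0_iff_ge mult_nonneg_nonneg)
  qed
  have g2: "(1-w)*(1+b*X) \<le> (1+b)*(1-X*w)"
  proof -
    have id: "(1+b)*(1-X*w) - (1-w)*(1+b*X) = (b+w)*(1-X)" by algebra
    have "0 \<le> (b+w)*(1-X)" using hw X1 by (intro mult_nonneg_nonneg) linarith+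
    then show ?thesis using id by linarith
  qed
  have g3: "b*(1+b*s)*(1-s) \<le> (1+b-b^3)*(1-X)*(1+b*X)"
  proof -
    have q: "(1+b*s)*(1-s) \<le> (1-b*\<sigma>)*(1+\<sigma>)"
    proof -
      have "(1+b*s)*(1-s) = 1 - (1-b)*s - b*s^2" by algebra
      also have "\<dots> \<le> 1 + (1-b)*\<sigma> - b*\<sigma>^2"
      proof -
        have "(1-b)*(-s) \<le> (1-b)*\<sigma>" unfolding \<sigma>_def using b1 by (intro mult_left_mono) auto
        moreover have "s^2 = \<sigma>^2" unfolding \<sigma>_def by simp
        ultimately show ?thesis by simp
      qed
      also have "\<dots> = (1-b*\<sigma>)*(1+\<sigma>)" by algebra
      finally show ?thesis .
    qed
    have t1: "\<sigma>*b \<le> 1" using s0 b0 b1 by (intro mult_le_one) auto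
    have t2: "0 \<le> 1+b+b^2-b^4-b^5" using b2 b0 by (simp add: zero_le_power2) 
    have P: "(1+b-b^3)*(1-X)*(1+b*X) - b*((1-b*\<sigma>)*(1+\<sigma>))
       = (1-b)*((1+b+b^2)*(1-\<sigma>*b) + \<sigma>*b^5 + \<sigma>^2*b^2*(1+b+b^2-b^4-b^5))"
      unfolding X_def by algebra
    have "0 \<le> (1+b+b^2)*(1-\<sigma>*b) + \<sigma>*b^5 + \<sigma>^2*b^2*(1+b+b^2-b^4-b^5)"
      using t1 t2 s0 b0 by (intro add_nonneg_nonneg mult_nonneg_nonneg) auto
    then have "0 \<le> (1+b-b^3)*(1-X)*(1+b*X) - b*((1-b*\<sigma>)*(1+\<sigma>))"
      unfolding P using b1 by simp
    moreover have "b*((1+b*s)*(1-s)) \<le> b*((1-b*\<sigma>)*(1+\<sigma>))" using q b0 by simp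
    ultimately show ?thesis by (simp add: mult.assoc)
  qed
  have c0: "0 \<le> 1+b-b^3" using b2 b0 by linarith
  have "b*(1+b*s)*(1-s)*(1-w) \<le> ((1+b-b^3)*(1-X)*(1+b*X))*(1-w)"
    using g3 hw b1 by (intro mult_right_mono) auto
  also have "\<dots> = ((1+b-b^3)*(1-X))*((1-w)*(1+b*X))" by (simp add: mult_ac)
  also have "\<dots> \<le> ((1+b-b^3)*(1-X))*((1+b)*(1-X*w))"
    using g2 c0 X1 by (intro mult_left_mono) auto
  also have "\<dots> = ((1+b)*(1+b-b^3))*((1-X)*(1-X*w))" by (simp add: mult_ac)
  also have "\<dots> \<le> ((1+b)*(1+b-b^3))*((1+x)*(1+x*w))"
    using g1 c0 b0 by (intro mult_left_mono) auto
  finally show ?thesis unfolding x_def by (simp add: mult_ac)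
qed

lemma beta_facts:
  assumes "lam \<noteq> 0"
  shows "0 < beta lam" "beta lam < 1" "(cmod lam)^2 = beta lam / (1 - beta lam)^2"
proof -
  define t where "t = (cmod lam)^2"
  have t0: "t > 0" unfolding t_def using assms by simp
  define s where "s = sqrt (4*t+1)"
  have s1: "s > 1" unfolding s_def using t0 by (simp add: real_less_rsqrt)
  have s2: "s^2 = 4*t+1" unfolding s_def using t0 by simp
  define q where "q = (s+1)/(s-1)"
  have q0: "q > 0" unfolding q_def using s1 by simp
  have "beta lam = exp (- ln q)" unfolding beta_def c_lam_def q_def s_def t_def by simp
  also have "\<dots> = 1/q" using q0 by (simp add: exp_minus inverse_eq_divide)
  also have "\<dots> = (s-1)/(s+1)" unfolding q_def by simp
  finally have b: "beta lam = (s-1)/(s+1)" .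
  show "0 < beta lam" "beta lam < 1" unfolding b using s1 by auto
  have "1 - beta lam = 2/(s+1)" unfolding b using s1 by (simp add: field_simps)
  then have "beta lam / (1 - beta lam)^2 = (s-1)*(s+1)/4" unfolding b using s1
    by (simp add: field_simps power2_eq_square)
  also have "\<dots> = (s^2 - 1)/4" by (simp add: algebra_simps power2_eq_square)
  also have "\<dots> = t" using s2 by simp
  finally show "(cmod lam)^2 = beta lam / (1 - beta lam)^2" unfolding t_def by simp
qed

definition Wf :: "real \<Rightarrow> nat \<Rightarrow> real" where
  "Wf b j = 1 - (-b)^(j+1)"

lemma W_rec: "Wf b (Suc (Suc j)) = Wf b (Suc j) * (1-b) + b * Wf b j"
  unfolding Wf_def by (simp add: algebra_simps)

lemma Zs_closed_mult:
  assumes "lam \<noteq> 0"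
  shows "Zs lam j * ((1 + beta lam) * (1 - beta lam)^j) = Wf (beta lam) j"
proof -
  define b where "b = beta lam"
  define t where "t = (cmod lam)^2"
  have b0: "0 < b" "b < 1" and tt: "t = b/(1-b)^2" using beta_facts[OF assms] unfolding b_def t_def by auto
  have tb: "t*((1-b)*(1-b)) = b" unfolding tt using b0 by (simp add: power2_eq_square)
  have "Zs lam j * ((1+b)*(1-b)^j) = Wf b j \<and> Zs lam (Suc j) * ((1+b)*(1-b)^(Suc j)) = Wf b (Suc j)"
  proof (induction j)
    case 0
    show ?case by (simp add: Zs_0 Zs_1 Wf_def algebra_simps power2_eq_square)
  next
    case (Suc j)
    define P where "P = (1-b)^j"
    have IH0: "Zs lam j * ((1+b)*P) = Wf b j" and IH1: "Zs lam (Suc j) * ((1+b)*P*(1-b)) = Wf b (Suc j)"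
      using Suc unfolding P_def by (simp_all add: mult_ac)
    have "Zs lam (Suc (Suc j)) * ((1+b)*(1-b)^(Suc (Suc j))) = Zs lam (Suc (Suc j)) * ((1+b)*P*(1-b)*(1-b))"
      unfolding P_def by (simp add: mult_ac)
    also have "\<dots> = (Zs lam (Suc j) * ((1+b)*P*(1-b)))*(1-b) + (t*((1-b)*(1-b)))*(Zs lam j*((1+b)*P))"
      unfolding Zs_rec t_def by algebra
    also have "\<dots> = Wf b (Suc j)*(1-b) + b*Wf b j" unfolding IH0 IH1 tb ..
    also have "\<dots> = Wf b (Suc (Suc j))" by (simp add: W_rec)
    finally show ?case using Suc by simp
  qed
  then show ?thesis unfolding b_def by simp
qed

lemma Wf_pos: "0 < b \<Longrightarrow> b < 1 \<Longrightarrow> 0 < Wf b j"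
proof -
  assume b: "0 < b" "b < 1"
  have "\<bar>(-b)^(j+1)\<bar> = \<bar>-b\<bar>^(j+1)" by (rule power_abs)
  also have "\<dots> = b^(j+1)" using b by simp
  also have "\<dots> < 1" using b by (subst power_less_one_iff) auto
  finally show ?thesis unfolding Wf_def by linarith
qed

lemma Zs_closed:
  assumes "lam \<noteq> 0"
  shows "Zs lam j = Wf (beta lam) j / ((1 + beta lam) * (1 - beta lam)^j)"
proof -
  have "(1 + beta lam) * (1 - beta lam)^j \<noteq> 0" using beta_facts[OF assms] by simp
  then show ?thesis using Zs_closed_mult[OF assms, of j] by (metis nonzero_mult_div_cancel_right)
qed

lemma Zs_pos: "lam \<noteq> 0 \<Longrightarrow> Zs lam j > 0"
  using Zs_closed[of lam j] beta_facts[of lam] Wf_pos[of "beta lam" j] by simp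

lemma pdiff:
  fixes b :: real
  assumes b0: "0 < b" and b1: "b < 1" and k: "1 \<le> k" and n: "1 \<le> n" and nm: "n < m"
  shows "\<bar>Wf b k * Wf b m / ((1+b) * Wf b (k+m)) - Wf b k * Wf b n / ((1+b) * Wf b (k+n))\<bar>
         \<le> (1 + b - b^3) * b^n"
proof -
  define s where "s = (-b)^k"
  define v where "v = (-b)^n"
  define w where "w = (-b)^(m-n)"
  have mm: "m = n + (m-n)" using nm by simp
  have Wk: "Wf b k = 1 + b*s" unfolding Wf_def s_def by simp
  have Wn: "Wf b n = 1 + b*v" unfolding Wf_def v_def by simp
  have Wm: "Wf b m = 1 + b*v*w"
  proof -
    have "(-b)^(m+1) = (-b)^(n + (m-n) + 1)" using mm by simp
    also have "\<dots> = -b*v*w" unfolding v_def w_def power_add by simp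
    finally show ?thesis unfolding Wf_def by simp
  qed
  have Wkm: "Wf b (k+m) = 1 + b*s*v*w"
  proof -
    have "(-b)^(k+m+1) = (-b)^(k + n + (m-n) + 1)" using mm by simp
    also have "\<dots> = -b*s*v*w" unfolding s_def v_def w_def power_add by simp
    finally show ?thesis unfolding Wf_def by simp
  qed
  have Wkn: "Wf b (k+n) = 1 + b*s*v"
  proof -
    have "(-b)^(k+n+1) = -b*s*v" unfolding s_def v_def power_add by simp
    then show ?thesis unfolding Wf_def by simp
  qed
  have pd: "1 \<le> j \<Longrightarrow> b^j \<le> b" for j :: nat
    using power_decreasing[of 1 j b] b0 b1 by simp
  have as: "\<bar>s\<bar> \<le> b" unfolding s_def power_abs using pd[OF k] b0 by simp
  have av: "\<bar>v\<bar> = b^n" unfolding v_def power_abs using b0 by simp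
  have av2: "\<bar>v\<bar> \<le> b" using av pd[OF n] by simp
  have aw: "\<bar>w\<bar> \<le> b" unfolding w_def power_abs using pd[of "m-n"] nm b0 by simp
  define D1 where "D1 = Wf b (k+m)"
  define D2 where "D2 = Wf b (k+n)"
  have D1: "D1 > 0" and D2: "D2 > 0" unfolding D1_def D2_def using Wf_pos b0 b1 by auto
  define Q where "Q = (1+b*s)*(1-s)*(1-w)"
  have Q0: "Q \<ge> 0" unfolding Q_def using as aw b0 b1
    by (intro mult_nonneg_nonneg) (auto simp: abs_le_iff, smt (verit) mult_left_le_one_le mult_minus_right mult_nonneg_nonneg)
  have rel: "(1+b*v*w)*D2 - (1+b*v)*D1 = -(b*v*(1-s)*(1-w))"
    unfolding D1_def D2_def Wkm Wkn by algebra
  have E: "Wf b k * Wf b m / ((1+b) * Wf b (k+m)) - Wf b k * Wf b n / ((1+b) * Wf b (k+n))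
         = - (b*v*Q) / ((1+b)*D1*D2)"
  proof -
    have "Wf b k * Wf b m / ((1+b) * Wf b (k+m)) - Wf b k * Wf b n / ((1+b) * Wf b (k+n))
        = (1+b*s) * ((1+b*v*w)*D2 - (1+b*v)*D1) / ((1+b)*D1*D2)"
    proof -
      define c where "c = 1 + b"
      have c: "c > 0" unfolding c_def using b0 by simp
      show ?thesis
        unfolding D1_def[symmetric] D2_def[symmetric] Wk Wm Wn c_def[symmetric] using D1 D2 c
        by (simp add: field_simps)
    qed
    also have "\<dots> = - (b*v*Q) / ((1+b)*D1*D2)" unfolding rel Q_def by (simp add: algebra_simps)
    finally show ?thesis .
  qed
  have den: "(1+b)*D1*D2 > 0" using D1 D2 b0 by simp
  have "\<bar>- (b*v*Q) / ((1+b)*D1*D2)\<bar> = b*\<bar>v\<bar>*Q / ((1+b)*D1*D2)"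
    using D1 D2 b0 Q0 by (simp add: abs_mult abs_divide)
  also have "\<dots> \<le> (1 + b - b^3) * \<bar>v\<bar>"
  proof -
    have "b*Q \<le> (1+b)*(1+b-b^3)*(D1*D2)"
      using key_ineq[OF b0 b1 as av2 aw] unfolding Q_def D1_def D2_def Wkm Wkn by (simp add: mult_ac)
    then have "b*Q*\<bar>v\<bar> \<le> ((1+b)*(1+b-b^3)*(D1*D2))*\<bar>v\<bar>" by (rule mult_right_mono) simp
    then show ?thesis using den by (simp add: pos_divide_le_eq mult_ac)
  qed
  finally show ?thesis unfolding E av .
qed

lemma norm_st_sq: "(norm_st M u)^2 = (\<Sum>\<sigma>\<in>lists_of_len M. (cmod (u \<sigma>))^2)"
proof -
  have "0 \<le> (\<Sum>\<sigma>\<in>lists_of_len M. (cmod (u \<sigma>))^2)" by (rule sum_nonneg) simp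
  then show ?thesis unfolding norm_st_def by simp
qed

lemma norm_st_nonneg: "0 \<le> norm_st M u" unfolding norm_st_def by (intro real_sqrt_ge_zero sum_nonneg) simp

lemma cs_inner: "cmod (inner_st M u v) \<le> norm_st M u * norm_st M v"
proof -
  have "cmod (inner_st M u v) \<le> (\<Sum>\<sigma>\<in>lists_of_len M. cmod (u \<sigma>) * cmod (v \<sigma>))"
    unfolding inner_st_def by (rule order_trans[OF norm_sum]) (simp add: norm_mult)
  also have "\<dots> \<le> sqrt ((\<Sum>\<sigma>\<in>lists_of_len M. (cmod (u \<sigma>))^2) * (\<Sum>\<sigma>\<in>lists_of_len M. (cmod (v \<sigma>))^2))"
    by (rule real_le_rsqrt, rule Cauchy_Schwarz_ineq_sum)
  also have "\<dots> = norm_st M u * norm_st M v" unfolding norm_st_def by (simp add: real_sqrt_mult)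
  finally show ?thesis .
qed

lemma apply_op_scale: "apply_op M A (\<lambda>\<sigma>. c * u \<sigma>) = (\<lambda>\<sigma>. c * apply_op M A u \<sigma>)"
  unfolding apply_op_def by (simp add: sum_distrib_left mult_ac)

lemma norm_st_scale: "norm_st M (\<lambda>\<sigma>. c * u \<sigma>) = cmod c * norm_st M u"
proof -
  have "(\<Sum>\<sigma>\<in>lists_of_len M. (cmod (c * u \<sigma>))^2) = (cmod c)^2 * (\<Sum>\<sigma>\<in>lists_of_len M. (cmod (u \<sigma>))^2)"
    by (simp add: norm_mult power_mult_distrib sum_distrib_left)
  then show ?thesis unfolding norm_st_def by (simp add: real_sqrt_mult)
qed

lemma comp_le_norm: "length \<tau> = M \<Longrightarrow> cmod (u \<tau>) \<le> norm_st M u"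
  unfolding norm_st_def
  by (rule real_le_rsqrt, rule member_le_sum[where f="\<lambda>\<sigma>. (cmod (u \<sigma>))^2"]) (auto simp: fin_len)

lemma op_bdd: "bdd_above {norm_st M (apply_op M A u) | u. norm_st M u \<le> 1}"
proof -
  define B where "B = sqrt (\<Sum>\<sigma>\<in>lists_of_len M. (\<Sum>\<tau>\<in>lists_of_len M. cmod (A \<sigma> \<tau>))^2)"
  have "norm_st M (apply_op M A u) \<le> B" if u: "norm_st M u \<le> 1" for u
  proof -
    have pt: "cmod (apply_op M A u \<sigma>) \<le> (\<Sum>\<tau>\<in>lists_of_len M. cmod (A \<sigma> \<tau>))" if "length \<sigma> = M" for \<sigma>
    proof -
      have "cmod (apply_op M A u \<sigma>) \<le> (\<Sum>\<tau>\<in>lists_of_len M. cmod (A \<sigma> \<tau>) * cmod (u \<tau>))"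
        unfolding apply_op_def using that by (intro order_trans[OF norm_sum]) (simp add: norm_mult)
      also have "\<dots> \<le> (\<Sum>\<tau>\<in>lists_of_len M. cmod (A \<sigma> \<tau>) * 1)"
      proof (intro sum_mono mult_left_mono)
        fix \<tau> assume "\<tau> \<in> lists_of_len M"
        then show "cmod (u \<tau>) \<le> 1" using comp_le_norm[of \<tau> M u] u by simp
      qed simp
      finally show ?thesis by simp
    qed
    show ?thesis unfolding norm_st_def B_def
      using pt by (intro real_sqrt_le_mono sum_mono power_mono) auto
  qed
  then show ?thesis by (intro bdd_aboveI[of _ B]) blast
qed

lemma op_nonneg: "0 \<le> op_norm M A"
proof -
  have z: "apply_op M A (\<lambda>_. 0) = (\<lambda>_. 0)" unfolding apply_op_def by simp
  have "norm_st M (apply_op M A (\<lambda>_. 0)) \<in> {norm_st M (apply_op M A u) | u. norm_st M u \<le> 1}"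
    by (intro CollectI exI[of _ "\<lambda>_. 0"]) (simp add: norm_st_def z)
  then have "norm_st M (apply_op M A (\<lambda>_. 0)) \<le> op_norm M A"
    unfolding op_norm_def by (rule cSup_upper[OF _ op_bdd])
  then show ?thesis by (simp add: z norm_st_def)
qed

lemma op_le: "norm_st M (apply_op M A u) \<le> op_norm M A * norm_st M u"
proof (cases "norm_st M u = 0")
  case True
  then have "\<forall>\<tau>\<in>lists_of_len M. u \<tau> = 0" using comp_le_norm[of _ M u] by (auto intro: antisym)
  then have "apply_op M A u \<sigma> = 0" if "length \<sigma> = M" for \<sigma>
    unfolding apply_op_def using that by (auto intro!: sum.neutral)
  then have "norm_st M (apply_op M A u) = 0" unfolding norm_st_def by simp
  then show ?thesis using True by simp
next
  case False
  then have np: "norm_st M u > 0" using norm_st_nonneg[of M u] by simp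
  define c where "c = complex_of_real (1 / norm_st M u)"
  have cm: "cmod c = 1 / norm_st M u" unfolding c_def using np by (simp add: norm_divide)
  have "norm_st M (\<lambda>\<sigma>. c * u \<sigma>) = 1" unfolding norm_st_scale cm using np by simp
  then have "norm_st M (apply_op M A (\<lambda>\<sigma>. c * u \<sigma>)) \<in> {norm_st M (apply_op M A u) | u. norm_st M u \<le> 1}"
    by force
  then have "norm_st M (apply_op M A (\<lambda>\<sigma>. c * u \<sigma>)) \<le> op_norm M A"
    unfolding op_norm_def by (rule cSup_upper[OF _ op_bdd])
  then have "norm_st M (apply_op M A u) / norm_st M u \<le> op_norm M A"
    unfolding apply_op_scale norm_st_scale cm by simp
  then show ?thesis using np by (simp add: pos_divide_le_eq)
qed

lemma quad_bound: "cmod (inner_st M u (apply_op M A u)) \<le> op_norm M A * (norm_st M u)^2"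
proof -
  have "cmod (inner_st M u (apply_op M A u)) \<le> norm_st M u * norm_st M (apply_op M A u)" by (rule cs_inner)
  also have "\<dots> \<le> norm_st M u * (op_norm M A * norm_st M u)"
    by (intro mult_left_mono op_le norm_st_nonneg)
  finally show ?thesis by (simp add: power2_eq_square mult_ac)
qed

lemma quad_decomp:
  fixes X Y P Q :: "bool list \<Rightarrow> complex" and K :: "bool list \<Rightarrow> bool list \<Rightarrow> complex"
  assumes orth: "\<And>\<rho>. \<rho> \<in> R \<Longrightarrow> P \<rho> = 0 \<or> Q \<rho> = 0"
  shows "(\<Sum>\<alpha>\<in>S. \<Sum>\<rho>\<in>R. cnj (X \<alpha> * P \<rho> + Y \<alpha> * Q \<rho>) * (\<Sum>\<tau>\<in>S. K \<alpha> \<tau> * (X \<tau> * P \<rho> + Y \<tau> * Q \<rho>)))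
   = (\<Sum>\<rho>\<in>R. cnj (P \<rho>) * P \<rho>) * (\<Sum>\<alpha>\<in>S. cnj (X \<alpha>) * (\<Sum>\<tau>\<in>S. K \<alpha> \<tau> * X \<tau>))
   + (\<Sum>\<rho>\<in>R. cnj (Q \<rho>) * Q \<rho>) * (\<Sum>\<alpha>\<in>S. cnj (Y \<alpha>) * (\<Sum>\<tau>\<in>S. K \<alpha> \<tau> * Y \<tau>))"
proof -
  have pt: "cnj (X \<alpha> * P \<rho> + Y \<alpha> * Q \<rho>) * (\<Sum>\<tau>\<in>S. K \<alpha> \<tau> * (X \<tau> * P \<rho> + Y \<tau> * Q \<rho>))
      = (cnj (P \<rho>) * P \<rho>) * (cnj (X \<alpha>) * (\<Sum>\<tau>\<in>S. K \<alpha> \<tau> * X \<tau>))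
      + (cnj (Q \<rho>) * Q \<rho>) * (cnj (Y \<alpha>) * (\<Sum>\<tau>\<in>S. K \<alpha> \<tau> * Y \<tau>))" if "\<rho> \<in> R" for \<alpha> \<rho>
  proof -
    have s: "(\<Sum>\<tau>\<in>S. K \<alpha> \<tau> * (X \<tau> * P \<rho> + Y \<tau> * Q \<rho>)) = P \<rho> * (\<Sum>\<tau>\<in>S. K \<alpha> \<tau> * X \<tau>) + Q \<rho> * (\<Sum>\<tau>\<in>S. K \<alpha> \<tau> * Y \<tau>)"
      by (simp add: sum.distrib sum_distrib_left algebra_simps)
    show ?thesis unfolding s using orth[OF that] by (auto simp: algebra_simps)
  qed
  have "(\<Sum>\<alpha>\<in>S. \<Sum>\<rho>\<in>R. cnj (X \<alpha> * P \<rho> + Y \<alpha> * Q \<rho>) * (\<Sum>\<tau>\<in>S. K \<alpha> \<tau> * (X \<tau> * P \<rho> + Y \<tau> * Q \<rho>)))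
     = (\<Sum>\<alpha>\<in>S. \<Sum>\<rho>\<in>R. (cnj (P \<rho>) * P \<rho>) * (cnj (X \<alpha>) * (\<Sum>\<tau>\<in>S. K \<alpha> \<tau> * X \<tau>))
      + (cnj (Q \<rho>) * Q \<rho>) * (cnj (Y \<alpha>) * (\<Sum>\<tau>\<in>S. K \<alpha> \<tau> * Y \<tau>)))"
    using pt by (intro sum.cong refl) auto
  also have "\<dots> = (\<Sum>\<rho>\<in>R. cnj (P \<rho>) * P \<rho>) * (\<Sum>\<alpha>\<in>S. cnj (X \<alpha>) * (\<Sum>\<tau>\<in>S. K \<alpha> \<tau> * X \<tau>))
   + (\<Sum>\<rho>\<in>R. cnj (Q \<rho>) * Q \<rho>) * (\<Sum>\<alpha>\<in>S. cnj (Y \<alpha>) * (\<Sum>\<tau>\<in>S. K \<alpha> \<tau> * Y \<tau>))"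
  proof -
    define p where "p = (\<lambda>\<rho>. cnj (P \<rho>) * P \<rho>)"
    define q where "q = (\<lambda>\<rho>. cnj (Q \<rho>) * Q \<rho>)"
    define x where "x = (\<lambda>\<alpha>. cnj (X \<alpha>) * (\<Sum>\<tau>\<in>S. K \<alpha> \<tau> * X \<tau>))"
    define y where "y = (\<lambda>\<alpha>. cnj (Y \<alpha>) * (\<Sum>\<tau>\<in>S. K \<alpha> \<tau> * Y \<tau>))"
    have "(\<Sum>\<alpha>\<in>S. \<Sum>\<rho>\<in>R. p \<rho> * x \<alpha> + q \<rho> * y \<alpha>) = (\<Sum>\<alpha>\<in>S. (\<Sum>\<rho>\<in>R. p \<rho>) * x \<alpha> + (\<Sum>\<rho>\<in>R. q \<rho>) * y \<alpha>)"
      by (simp only: sum.distrib sum_distrib_right)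
    also have "\<dots> = (\<Sum>\<rho>\<in>R. p \<rho>) * (\<Sum>\<alpha>\<in>S. x \<alpha>) + (\<Sum>\<rho>\<in>R. q \<rho>) * (\<Sum>\<alpha>\<in>S. y \<alpha>)"
      by (simp only: sum.distrib sum_distrib_left)
    finally show ?thesis unfolding p_def q_def x_def y_def .
  qed
  finally show ?thesis .
qed

lemma cnj_div_real: "cnj (z / complex_of_real r) * (z / complex_of_real r) = complex_of_real ((cmod z)^2 / r^2)"
proof -
  have "cnj z * z = complex_of_real ((cmod z)^2)" unfolding complex_norm_square by (rule mult.commute)
  then show ?thesis by (simp add: power2_eq_square)
qed

lemma sum_cnj_div: "(\<Sum>\<rho>\<in>R. cnj (f \<rho> / complex_of_real r) * (f \<rho> / complex_of_real r))
   = complex_of_real ((\<Sum>\<rho>\<in>R. (cmod (f \<rho>))^2) / r^2)"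
  unfolding cnj_div_real of_real_sum[symmetric] sum_divide_distrib ..

lemma inner_formula:
  fixes lam :: complex and xi :: "bool list \<Rightarrow> complex" and A :: "bool list \<Rightarrow> bool list \<Rightarrow> complex"
    and d k j M :: nat
  assumes lam: "lam \<noteq> 0" and dM: "M = d + 3*k"
  defines "X \<equiv> (\<lambda>\<alpha>. xi (take d \<alpha>) * phi lam k (drop d \<alpha>))"
      and "Y \<equiv> (\<lambda>\<alpha>. xi (take d \<alpha>) * Uf lam k (drop d \<alpha>))"
  shows "inner_st (d + 3*(k+j)) (psi d xi lam (k+j)) (apply_op M A (psi d xi lam (k+j)))
     = complex_of_real (Zs lam j / Zs lam (k+j)) * inner_st M X (apply_op M A X)
     + complex_of_real ((cmod lam)^2 * ZV lam j / Zs lam (k+j)) * inner_st M Y (apply_op M A Y)"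
proof -
  define c where "c = norm_st (3*(k+j)) (phi lam (k+j))"
  have c2: "c^2 = Zs lam (k+j)" unfolding c_def norm_st_sq Zs_def ..
  define P where "P = (\<lambda>\<rho>. phi lam j \<rho> / complex_of_real c)"
  define Q where "Q = (\<lambda>\<rho>. lam * Vf lam j \<rho> / complex_of_real c)"
  let ?\<psi> = "psi d xi lam (k+j)"
  have psi_eq: "?\<psi> (\<alpha>@\<rho>) = X \<alpha> * P \<rho> + Y \<alpha> * Q \<rho>" if "length \<alpha> = M" "length \<rho> = 3*j" for \<alpha> \<rho>
  proof -
    have t: "take d (\<alpha>@\<rho>) = take d \<alpha>" "drop d (\<alpha>@\<rho>) = drop d \<alpha> @ \<rho>" using that dM by auto
    have l: "length (drop d \<alpha>) = 3*k" using that dM by simp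
    show ?thesis unfolding psi_def phi_hat_def t phi_split[OF l that(2)] X_def Y_def P_def Q_def c_def[symmetric]
      by (simp add: algebra_simps add_divide_distrib)
  qed
  have A_eq: "apply_op M A ?\<psi> (\<alpha>@\<rho>) = (\<Sum>\<tau>\<in>lists_of_len M. A \<alpha> \<tau> * (X \<tau> * P \<rho> + Y \<tau> * Q \<rho>))"
    if "length \<alpha> = M" "length \<rho> = 3*j" for \<alpha> \<rho>
    unfolding apply_op_def using that psi_eq by (intro sum.cong) auto
  have "inner_st (d + 3*(k+j)) ?\<psi> (apply_op M A ?\<psi>)
      = (\<Sum>\<alpha>\<in>lists_of_len M. \<Sum>\<rho>\<in>lists_of_len (3*j). cnj (?\<psi> (\<alpha>@\<rho>)) * apply_op M A ?\<psi> (\<alpha>@\<rho>))"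
    unfolding inner_st_def using sum_len_append[where a=M and b="3*j"] dM by (simp add: distrib_left add.assoc)
  also have "\<dots> = (\<Sum>\<alpha>\<in>lists_of_len M. \<Sum>\<rho>\<in>lists_of_len (3*j). cnj (X \<alpha> * P \<rho> + Y \<alpha> * Q \<rho>) * (\<Sum>\<tau>\<in>lists_of_len M. A \<alpha> \<tau> * (X \<tau> * P \<rho> + Y \<tau> * Q \<rho>)))"
    using psi_eq A_eq by (intro sum.cong refl) auto
  also have "\<dots> = (\<Sum>\<rho>\<in>lists_of_len (3*j). cnj (P \<rho>) * P \<rho>) * (\<Sum>\<alpha>\<in>lists_of_len M. cnj (X \<alpha>) * (\<Sum>\<tau>\<in>lists_of_len M. A \<alpha> \<tau> * X \<tau>))
   + (\<Sum>\<rho>\<in>lists_of_len (3*j). cnj (Q \<rho>) * Q \<rho>) * (\<Sum>\<alpha>\<in>lists_of_len M. cnj (Y \<alpha>) * (\<Sum>\<tau>\<in>lists_of_len M. A \<alpha> \<tau> * Y \<tau>))"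
  proof (rule quad_decomp)
    fix \<rho> show "P \<rho> = 0 \<or> Q \<rho> = 0" using phi_V_ortho[of lam j \<rho>] unfolding P_def Q_def by auto
  qed
  also have "(\<Sum>\<rho>\<in>lists_of_len (3*j). cnj (P \<rho>) * P \<rho>) = complex_of_real (Zs lam j / Zs lam (k+j))"
    unfolding P_def sum_cnj_div c2 Zs_def ..
  also have "(\<Sum>\<rho>\<in>lists_of_len (3*j). cnj (Q \<rho>) * Q \<rho>) = complex_of_real ((cmod lam)^2 * ZV lam j / Zs lam (k+j))"
    unfolding Q_def sum_cnj_div c2 ZV_def by (simp add: norm_mult power_mult_distrib sum_distrib_left)
  also have "(\<Sum>\<alpha>\<in>lists_of_len M. cnj (X \<alpha>) * (\<Sum>\<tau>\<in>lists_of_len M. A \<alpha> \<tau> * X \<tau>)) = inner_st M X (apply_op M A X)"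
    unfolding inner_st_def apply_op_def by (intro sum.cong refl) simp
  also have "(\<Sum>\<alpha>\<in>lists_of_len M. cnj (Y \<alpha>) * (\<Sum>\<tau>\<in>lists_of_len M. A \<alpha> \<tau> * Y \<tau>)) = inner_st M Y (apply_op M A Y)"
    unfolding inner_st_def apply_op_def by (intro sum.cong refl) simp
  finally show ?thesis .
qed

lemma p_closed:
  assumes lam: "lam \<noteq> 0"
  shows "Zs lam k * Zs lam j / Zs lam (k+j)
       = Wf (beta lam) k * Wf (beta lam) j / ((1 + beta lam) * Wf (beta lam) (k+j))"
proof -
  define b where "b = beta lam"
  have b0: "0 < b" "b < 1" using beta_facts[OF lam] unfolding b_def by auto
  define P1 where "P1 = (1-b)^k"
  define P2 where "P2 = (1-b)^j"
  define c where "c = 1 + b"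
  have pos: "P1 > 0" "P2 > 0" "c > 0" "Wf b (k+j) > 0" unfolding P1_def P2_def c_def using b0 Wf_pos by auto
  have pk: "(1-b)^(k+j) = P1*P2" unfolding P1_def P2_def by (simp add: power_add)
  show ?thesis unfolding Zs_closed[OF lam] b_def[symmetric] pk P1_def[symmetric] P2_def[symmetric] c_def[symmetric]
    using pos by (simp add: field_simps)
qed

lemma norm_X:
  fixes xi :: "bool list \<Rightarrow> complex" and g :: "bool list \<Rightarrow> complex"
  assumes "norm_st d xi = 1"
  shows "(norm_st (d + 3*k) (\<lambda>\<alpha>. xi (take d \<alpha>) * g (drop d \<alpha>)))^2 = (\<Sum>\<tau>\<in>lists_of_len (3*k). (cmod (g \<tau>))^2)"
proof -
  have x1: "(\<Sum>a\<in>lists_of_len d. (cmod (xi a))^2) = 1" using assms norm_st_sq[of d xi] by simp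
  have "(norm_st (d + 3*k) (\<lambda>\<alpha>. xi (take d \<alpha>) * g (drop d \<alpha>)))^2
      = (\<Sum>a\<in>lists_of_len d. \<Sum>\<tau>\<in>lists_of_len (3*k). (cmod (xi a))^2 * (cmod (g \<tau>))^2)"
    unfolding norm_st_sq sum_len_append by (intro sum.cong refl) (simp add: norm_mult power_mult_distrib)
  also have "\<dots> = (\<Sum>a\<in>lists_of_len d. (cmod (xi a))^2) * (\<Sum>\<tau>\<in>lists_of_len (3*k). (cmod (g \<tau>))^2)"
    by (simp add: sum_product)
  finally show ?thesis using x1 by simp
qed

theorem lemma4p2:
  fixes lam :: complex and d k m n :: nat
    and xi :: "bool list \<Rightarrow> complex"
    and A :: "bool list \<Rightarrow> bool list \<Rightarrow> complex"
  assumes "lam \<noteq> 0"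
    and "d \<ge> 1"
    and "norm_st d xi = 1"
    and "1 \<le> n" and "n < m"
  shows "cmod (inner_st (d + 3 * (k + m)) (psi d xi lam (k + m))
                 (apply_op (d + 3 * k) A (psi d xi lam (k + m)))
             - inner_st (d + 3 * (k + n)) (psi d xi lam (k + n))
                 (apply_op (d + 3 * k) A (psi d xi lam (k + n))))
         \<le> 2 * (1 + beta lam - beta lam ^ 3) * op_norm (d + 3 * k) A * beta lam ^ n"
proof -
  note lam = assms(1)
  define b where "b = beta lam"
  have b0: "0 < b" "b < 1" using beta_facts[OF lam] unfolding b_def by auto
  define t where "t = (cmod lam)^2"
  define M where "M = d + 3*k"
  define op where "op = op_norm M A"
  have op0: "0 \<le> op" unfolding op_def by (rule op_nonneg)
  define X where "X = (\<lambda>\<alpha>. xi (take d \<alpha>) * phi lam k (drop d \<alpha>))"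
  define Y where "Y = (\<lambda>\<alpha>. xi (take d \<alpha>) * Uf lam k (drop d \<alpha>))"
  define aX where "aX = inner_st M X (apply_op M A X)"
  define aY where "aY = inner_st M Y (apply_op M A Y)"
  define E where "E = (\<lambda>j. inner_st (d + 3*(k+j)) (psi d xi lam (k+j)) (apply_op M A (psi d xi lam (k+j))))"
  have Ej: "E j = complex_of_real (Zs lam j / Zs lam (k+j)) * aX
       + complex_of_real (t * ZV lam j / Zs lam (k+j)) * aY" for j
    unfolding E_def aX_def aY_def X_def Y_def t_def by (rule inner_formula[OF lam M_def])
  have haX: "cmod aX \<le> op * Zs lam k"
    using quad_bound[of M X A] norm_X[OF assms(3), of k "phi lam k"] unfolding aX_def op_def M_def X_def Zs_def
    by simp
  have haY: "cmod aY \<le> op * Zu lam k"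
    using quad_bound[of M Y A] norm_X[OF assms(3), of k "Uf lam k"] unfolding aY_def op_def M_def Y_def Zu_def
    by simp
  have c0: "0 \<le> 1 + b - b^3"
  proof -
    have "b^3 \<le> 1" using b0 by (intro power_le_one) auto
    then show ?thesis using b0 by linarith
  qed
  have goal: "cmod (E m - E n) \<le> 2 * (1 + b - b^3) * op * b^n"
  proof (cases "k = 0")
    case True
    have "Zu lam k = 0" using True by (simp add: Zu_eq[OF lam])
    then have aY0: "aY = 0" using haY by simp
    have "E j = aX" for j using True Zs_pos[OF lam, of j] unfolding Ej aY0 by simp
    then have "cmod (E m - E n) = 0" by simp
    also have "\<dots> \<le> 2 * (1 + b - b^3) * op * b^n" using c0 op0 b0 by simp
    finally show ?thesis .
  next
    case False
    then have k1: "1 \<le> k" by simp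
    define Zk where "Zk = Zs lam k"
    define Zv where "Zv = Zu lam k"
    have Zk0: "Zk > 0" unfolding Zk_def by (rule Zs_pos[OF lam])
    have Zv0: "Zv > 0" unfolding Zv_def using False Zu_eq[OF lam, of k] Zs_pos[OF lam] by simp
    define a' where "a' = aX / complex_of_real Zk"
    define b' where "b' = aY / complex_of_real Zv"
    have ha': "cmod a' \<le> op" unfolding a'_def using haX Zk0 unfolding Zk_def
      by (simp add: norm_divide pos_divide_le_eq)
    have hb': "cmod b' \<le> op" unfolding b'_def using haY Zv0 unfolding Zv_def
      by (simp add: norm_divide pos_divide_le_eq)
    define p where "p = (\<lambda>j. Zk * Zs lam j / Zs lam (k+j))"
    have Ep: "E j = complex_of_real (p j) * a' + complex_of_real (1 - p j) * b'" for j
    proof -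
      have Zkj: "Zs lam (k+j) = Zk * Zs lam j + t * Zv * ZV lam j"
        unfolding Zk_def Zv_def t_def by (rule Zs_split)
      have pos: "Zs lam (k+j) > 0" by (rule Zs_pos[OF lam])
      have q: "1 - p j = t * Zv * ZV lam j / Zs lam (k+j)"
        unfolding p_def using pos Zkj by (simp add: field_simps)
      have e1: "complex_of_real (Zs lam j / Zs lam (k+j)) * aX = complex_of_real (p j) * a'"
        unfolding p_def a'_def using Zk0 by (simp add: field_simps)
      have e2: "complex_of_real (t * ZV lam j / Zs lam (k+j)) * aY = complex_of_real (1 - p j) * b'"
        unfolding q b'_def using Zv0 by (simp add: field_simps)
      show ?thesis unfolding Ej e1 e2 ..
    qed
    have "E m - E n = complex_of_real (p m - p n) * (a' - b')"
      unfolding Ep by (simp add: algebra_simps)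
    then have "cmod (E m - E n) = cmod (complex_of_real (p m - p n)) * cmod (a' - b')" by (simp only: norm_mult)
    also have "\<dots> = \<bar>p m - p n\<bar> * cmod (a' - b')" by (simp only: norm_of_real)
    also have "\<dots> \<le> ((1 + b - b^3) * b^n) * (2 * op)"
    proof (rule mult_mono)
      have "p m - p n = Wf b k * Wf b m / ((1+b) * Wf b (k+m)) - Wf b k * Wf b n / ((1+b) * Wf b (k+n))"
        unfolding p_def Zk_def p_closed[OF lam] b_def ..
      then show "\<bar>p m - p n\<bar> \<le> (1 + b - b^3) * b^n"
        using pdiff[OF b0 k1 assms(4) assms(5)] by simp
      show "cmod (a' - b') \<le> 2 * op"
        using norm_triangle_ineq4[of a' b'] ha' hb' by linarith
    qed (use c0 b0 op0 in auto)
    finally show ?thesis by (simp add: mult_ac)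
  qed
  then show ?thesis unfolding E_def M_def op_def b_def .
qed

end
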